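(* Let $(f_n)$ be a sequence of complex rational maps of degree $d\ge1$ and $\eta$ a scale. Let $\mathcal C(f)_\eta$ denote the limit in $\mathbb P^1(\mathscr H_\eta)$ of the critical divisors $\mathcal C(f_n)$ (and, when $\eta<(1)$, $\widetilde{\mathcal C}(f)_\eta$ its limit in $\mathbb P^1(\widetilde{\mathscr H}_\eta)$). Then $$\mathcal C(f)_\eta=\mathcal C(f_\eta)+2D_\eta(f),\qquad \widetilde{\mathcal C}(f)_\eta=\mathcal C(\tilde f_\eta)+2\tilde D_\eta(f).$$
   Context: Fix a non-principal ultrafilter $\omega$ on $\mathbb N$; $\lim$ denotes the limit along $\omega$. A scale is an equivalence class of bounded sequences $\varepsilon=(\varepsilon_n)$ of positive reals, $(\varepsilon_n)\sim(\eta_n)$ iff $\lim\varepsilon_n/\eta_n\in(0,\infty)$; scales are totally ordered by $\varepsilon\le\eta$ iff $\lim \varepsilon_n/\eta_n<\infty$; the maximal scale is $(1)$. For a scale $\varepsilon$, $\mathscr H_\varepsilon$ is the quotient of $\{(z_n)\in\mathbb C^{\mathbb N}:\lim|z_n|^{\varepsilon_n}<\infty\}$ by $\{(z_n):\lim|z_n|^{\varepsilon_n}=0\}$, normed by $|(z_n)|=\lim|z_n|^{\min(1,\varepsilon_n)}$; $\mathscr H_{(1)}\cong\mathbb C$, and for $\varepsilon<(1)$ it is an algebraically closed complete non-Archimedean field with residue field $\widetilde{\mathscr H}_\varepsilon$ of characteristic $0$. For a sequence $(f_n)$ of complex rational maps of degree $d$, write $f_n=[P_n:Q_n]$ with coefficients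 of maximal modulus $1$; the coefficient sequences define $P_\varepsilon,Q_\varepsilon$ over $\mathscr H_\varepsilon$ (resp. their reductions over $\widetilde{\mathscr H}_\varepsilon$); with $H=\gcd(P_\varepsilon,Q_\varepsilon)$, $P_\varepsilon=H\hat P_\varepsilon$, $Q_\varepsilon=H\hat Q_\varepsilon$, the limit is $f_\varepsilon=[\hat P_\varepsilon:\hat Q_\varepsilon]$ and the hole divisor $D_\varepsilon(f)$ is the divisor of zeros of $H$; $\tilde f_\varepsilon$, $\tilde D_\varepsilon(f)$ are defined likewise over $\widetilde{\mathscr H}_\varepsilon$. A sequence of effective divisors of fixed degree on $\mathbb P^1(\mathbb C)$ has a limit in $\mathbb P^1(\mathscr H_\varepsilon)$ (resp. $\mathbb P^1(\widetilde{\mathscr H}_\varepsilon)$), defined by taking the limit of the coefficients of a normalized defining homogeneous polynomial. The critical divisor of a rational map $g$ is $\mathcal C(g)=\sum_p(\deg_p g-1)[p]$. *)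

theory Defs
  imports "HOL-Analysis.Analysis" "HOL-Computational_Algebra.Polynomial_Factorial"
begin

definition free_ultrafilter :: "nat filter \<Rightarrow> bool" where
  "free_ultrafilter w \<longleftrightarrow> w \<noteq> bot \<and> w \<le> cofinite \<and>
     (\<forall>P. eventually P w \<or> eventually (\<lambda>n. \<not> P n) w)"

text \<open>Scales are represented by bounded sequences of positive reals; the relations
  between scales are stated on representatives (they are invariant under equivalence).\<close>
definition is_scale :: "(nat \<Rightarrow> real) \<Rightarrow> bool" where
  "is_scale e \<longleftrightarrow> (\<forall>n. e n > 0) \<and> (\<exists>B. \<forall>n. e n \<le> B)"

definition scale_le :: "nat filter \<Rightarrow> (nat \<Rightarrow> real) \<Rightarrow> (nat \<Rightarrow> real) \<Rightarrow> bool" where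
  "scale_le w e h \<longleftrightarrow> (\<exists>L::real. ((\<lambda>n. e n / h n) \<longlongrightarrow> L) w)"

definition scale_equiv :: "nat filter \<Rightarrow> (nat \<Rightarrow> real) \<Rightarrow> (nat \<Rightarrow> real) \<Rightarrow> bool" where
  "scale_equiv w e h \<longleftrightarrow> (\<exists>L::real. L > 0 \<and> ((\<lambda>n. e n / h n) \<longlongrightarrow> L) w)"

definition scale_less :: "nat filter \<Rightarrow> (nat \<Rightarrow> real) \<Rightarrow> (nat \<Rightarrow> real) \<Rightarrow> bool" where
  "scale_less w e h \<longleftrightarrow> scale_le w e h \<and> \<not> scale_equiv w e h"

definition admissible :: "nat filter \<Rightarrow> (nat \<Rightarrow> real) \<Rightarrow> (nat \<Rightarrow> complex) set" where
  "admissible w e = {z. \<exists>L::real. ((\<lambda>n. cmod (z n) powr e n) \<longlongrightarrow> L) w}"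

definition negligible :: "nat filter \<Rightarrow> (nat \<Rightarrow> real) \<Rightarrow> (nat \<Rightarrow> complex) set" where
  "negligible w e = {z. ((\<lambda>n. cmod (z n) powr e n) \<longlongrightarrow> 0) w}"

definition val_ring :: "nat filter \<Rightarrow> (nat \<Rightarrow> real) \<Rightarrow> (nat \<Rightarrow> complex) set" where
  "val_ring w e = {z. z \<in> admissible w e \<and>
     (\<exists>L::real. L \<le> 1 \<and> ((\<lambda>n. cmod (z n) powr min 1 (e n)) \<longlongrightarrow> L) w)}"

definition max_ideal :: "nat filter \<Rightarrow> (nat \<Rightarrow> real) \<Rightarrow> (nat \<Rightarrow> complex) set" where
  "max_ideal w e = {z. z \<in> admissible w e \<and>
     (\<exists>L::real. L < 1 \<and> ((\<lambda>n. cmod (z n) powr min 1 (e n)) \<longlongrightarrow> L) w)}"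

text \<open>phi identifies the field 'k with the quotient ring A/N: phi is a surjective
  unital ring homomorphism from A (pointwise operations) onto 'k with kernel N.
  Any such 'k is isomorphic to A/N, so quantifying over all of them is the same as
  working in A/N.\<close>
definition quotient_map ::
  "(nat \<Rightarrow> complex) set \<Rightarrow> (nat \<Rightarrow> complex) set \<Rightarrow> ((nat \<Rightarrow> complex) \<Rightarrow> 'k::field) \<Rightarrow> bool" where
  "quotient_map A N phi \<longleftrightarrow>
     (\<forall>z\<in>A. \<forall>u\<in>A. phi (\<lambda>n. z n + u n) = phi z + phi u \<and> phi (\<lambda>n. z n * u n) = phi z * phi u)
     \<and> phi (\<lambda>n. 1) = 1 \<and> phi ` A = UNIV \<and> (\<forall>z\<in>A. phi z = 0 \<longleftrightarrow> z \<in> N)"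

text \<open>A binary form of formal degree N over a field is represented by the univariate
  polynomial f with degree f \<le> N: F(X,Y) = sum_{i\<le>N} coeff f i X^i Y^(N-i).
  A point of P^1 is a nonzero pair (a,b), i.e. [a:b]; infinity is [1:0].\<close>
definition form_eval :: "nat \<Rightarrow> 'a::comm_ring_1 poly \<Rightarrow> 'a \<times> 'a \<Rightarrow> 'a" where
  "form_eval N f x = (\<Sum>i\<le>N. coeff f i * fst x ^ i * snd x ^ (N - i))"

definition form_ord :: "nat \<Rightarrow> 'a::field poly \<Rightarrow> 'a \<times> 'a \<Rightarrow> nat" where
  "form_ord N f x = (if snd x \<noteq> 0 then order (fst x / snd x) f else N - degree f)"

definition rat_map :: "nat \<Rightarrow> 'a::field poly \<Rightarrow> 'a poly \<Rightarrow> bool" where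
  "rat_map N p q \<longleftrightarrow> coprime p q \<and> max (degree p) (degree q) = N"

text \<open>Local degree of g = [P:Q] at x: multiplicity of x in the fibre g^{-1}(g(x)),
  the zero divisor of Q(x) P - P(x) Q.\<close>
definition local_deg :: "nat \<Rightarrow> 'a::field poly \<Rightarrow> 'a poly \<Rightarrow> 'a \<times> 'a \<Rightarrow> nat" where
  "local_deg N p q x = form_ord N (smult (form_eval N q x) p - smult (form_eval N p x) q) x"

definition crit_div :: "nat \<Rightarrow> 'a::field poly \<Rightarrow> 'a poly \<Rightarrow> 'a \<times> 'a \<Rightarrow> int" where
  "crit_div N p q x = int (local_deg N p q x) - 1"

definition normalized_pair :: "nat \<Rightarrow> complex poly \<Rightarrow> complex poly \<Rightarrow> bool" where
  "normalized_pair N p q \<longleftrightarrow> degree p \<le> N \<and> degree q \<le> N \<and>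
     Max ((\<lambda>i. max (cmod (coeff p i)) (cmod (coeff q i))) ` {..N}) = 1"

definition normalized_form :: "nat \<Rightarrow> complex poly \<Rightarrow> bool" where
  "normalized_form N f \<longleftrightarrow> degree f \<le> N \<and> Max ((\<lambda>i. cmod (coeff f i)) ` {..N}) = 1"

definition lim_form :: "((nat \<Rightarrow> complex) \<Rightarrow> 'k::field) \<Rightarrow> nat \<Rightarrow> (nat \<Rightarrow> complex poly) \<Rightarrow> 'k poly" where
  "lim_form phi N F = (\<Sum>i\<le>N. monom (phi (\<lambda>n. coeff (F n) i)) i)"

text \<open>The conclusion over the limit field given by phi: for the factorisation
  P_lim = H Phat, Q_lim = H Qhat with H = gcd (degree k) and Phat, Qhat coprime of
  degree e (so f_lim = [Phat:Qhat], D(f) = zero divisor of H), and f_lim nonconstant,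
  the limit of the critical divisors equals C(f_lim) + 2 D(f).\<close>
definition crit_limit_formula ::
  "((nat \<Rightarrow> complex) \<Rightarrow> 'k::field) \<Rightarrow> nat \<Rightarrow> (nat \<Rightarrow> complex poly) \<Rightarrow> (nat \<Rightarrow> complex poly)
     \<Rightarrow> (nat \<Rightarrow> complex poly) \<Rightarrow> bool" where
  "crit_limit_formula phi d P Q F \<longleftrightarrow>
     (\<forall>k e h ph qh. k + e = d \<and> degree h \<le> k \<and>
        lim_form phi d P = h * ph \<and> lim_form phi d Q = h * qh \<and> rat_map e ph qh \<and> e \<ge> 1
      \<longrightarrow> (\<forall>x. x \<noteq> (0, 0) \<longrightarrow>
             int (form_ord (2 * d - 2) (lim_form phi (2 * d - 2) F) x)
               = crit_div e ph qh x + 2 * int (form_ord k h x)))"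

end

theory Submission
  imports Defs "HOL-Computational_Algebra.Fundamental_Theorem_Algebra"
begin


definition wr :: "'a::field poly \<Rightarrow> 'a poly \<Rightarrow> 'a poly" where
  "wr p q = pderiv p * q - p * pderiv q"

lemma wr_ident1:
  fixes p q :: "'a::field poly"
  shows "pderiv (smult a p - smult b q) * q - (smult a p - smult b q) * pderiv q = smult a (wr p q)"
  by (simp add: wr_def pderiv_diff pderiv_smult smult_diff_right algebra_simps)

lemma wr_ident2:
  fixes p q :: "'a::field poly"
  shows "pderiv (smult a p - smult b q) * p - (smult a p - smult b q) * pderiv p = smult b (wr p q)"
  by (simp add: wr_def pderiv_diff pderiv_smult smult_diff_right algebra_simps)

lemma fin_ord:
  fixes G r :: "'a::field poly"
  assumes ch: "\<And>m. of_nat (Suc m) \<noteq> (0::'a)"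
    and G0: "G \<noteq> 0" and Gt: "poly G t = 0" and rt: "poly r t \<noteq> 0"
  shows "order t (pderiv G * r - G * pderiv r) = order t G - 1"
    and "pderiv G * r - G * pderiv r \<noteq> 0"
proof -
  define m where "m = order t G"
  have m1: "m \<noteq> 0" using Gt G0 order_root m_def by blast
  then obtain k where mk: "m = Suc k" by (cases m) auto
  obtain R where GR: "G = [:-t,1:]^m * R" using order_1[of t G] m_def by (auto elim: dvdE)
  have Rt: "poly R t \<noteq> 0"
  proof
    assume "poly R t = 0"
    then have "[:-t,1:] dvd R" using poly_eq_0_iff_dvd by blast
    then obtain S where RS: "R = [:-t,1:] * S" by (rule dvdE)
    have "G = [:-t,1:]^Suc m * S" using GR RS by (simp only: power_Suc2 mult.assoc)
    then have "[:-t,1:]^Suc m dvd G" by (metis dvd_triv_left)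
    then show False using order_2[OF G0] m_def by blast
  qed
  define S where "S = smult (of_nat m) R * r + [:-t,1:] * (pderiv R * r - R * pderiv r)"
  define X where "X = [:-t,1:]"
  have dX: "pderiv X = 1" by (simp add: X_def pderiv_pCons)
  have eq0: "pderiv (X^Suc k * R) * r - (X^Suc k * R) * pderiv r
     = X^k * (smult (of_nat (Suc k)) R * r + X * (pderiv R * r - R * pderiv r))"
    by (simp add: pderiv_mult pderiv_power_Suc dX algebra_simps del: power_Suc) (simp add: power_Suc2 algebra_simps del: power_Suc)
  have eq: "pderiv G * r - G * pderiv r = [:-t,1:]^k * S"
    using eq0 unfolding GR S_def mk X_def by simp
  have St: "poly S t \<noteq> 0" using Rt rt ch[of k] by (simp add: S_def mk)
  then have S0: "S \<noteq> 0" by auto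
  show ne: "pderiv G * r - G * pderiv r \<noteq> 0" unfolding eq using S0 by simp
  have "order t (pderiv G * r - G * pderiv r) = k + order t S"
    unfolding eq using S0 by (simp add: order_mult order_power_n_n)
  also have "order t S = 0" using St by (rule order_0I)
  finally show "order t (pderiv G * r - G * pderiv r) = order t G - 1" using mk m_def by simp
qed

lemma coeff_mult_bound:
  fixes p q :: "'a::comm_semiring_1 poly"
  assumes "degree p \<le> a" "degree q \<le> b"
  shows "coeff (p * q) (a + b) = coeff p a * coeff q b"
proof -
  have "coeff (p * q) (a + b) = (\<Sum>i\<le>a+b. coeff p i * coeff q (a + b - i))" by (rule coeff_mult)
  also have "\<dots> = (\<Sum>i\<in>{a}. coeff p i * coeff q (a + b - i))"
  proof (rule sum.mono_neutral_right)
    show "\<forall>i\<in>{..a + b} - {a}. coeff p i * coeff q (a + b - i) = 0"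
    proof
      fix i assume i: "i \<in> {..a + b} - {a}"
      show "coeff p i * coeff q (a + b - i) = 0"
      proof (cases "i < a")
        case True then have "a + b - i > b" using i by auto
        then show ?thesis using assms(2) by (simp add: coeff_eq_0)
      next
        case False then have "i > a" using i by auto
        then show ?thesis using assms(1) by (simp add: coeff_eq_0)
      qed
    qed
  qed auto
  finally show ?thesis by simp
qed

lemma inf_deg:
  fixes G r :: "'a::field poly"
  assumes ch: "\<And>m. of_nat (Suc m) \<noteq> (0::'a)"
    and G0: "G \<noteq> 0" and dr: "degree r = N" and dG: "degree G < N"
  shows "degree (pderiv G * r - G * pderiv r) = N + degree G - 1"
    and "pderiv G * r - G * pderiv r \<noteq> 0"
proof -
  define g where "g = degree G"
  define E where "E = pderiv G * r - G * pderiv r"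
  have dpG: "degree (pderiv G) \<le> g - 1"
    by (rule degree_le) (auto simp: coeff_pderiv g_def coeff_eq_0)
  have dpr: "degree (pderiv r) \<le> N - 1"
    by (rule degree_le) (auto simp: coeff_pderiv dr coeff_eq_0)
  have N1: "N \<ge> 1" using dG by auto
  have c2: "coeff (G * pderiv r) (g + (N - 1)) = coeff G g * (of_nat N * coeff r N)"
    using coeff_mult_bound[OF _ dpr, of G g] N1 by (simp add: g_def coeff_pderiv)
  have ub: "degree E \<le> N + g - 1"
  proof -
    have "degree (pderiv G * r) \<le> N + g - 1"
    proof (cases "g = 0")
      case True then have "pderiv G = 0" using g_def by (auto elim: degree_eq_zeroE)
      then show ?thesis by simp
    next
      case False
      have "degree (pderiv G * r) \<le> degree (pderiv G) + degree r" by (rule degree_mult_le)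
      then show ?thesis using dpG dr False by linarith
    qed
    moreover have "degree (G * pderiv r) \<le> N + g - 1"
      using degree_mult_le[of G "pderiv r"] dpr N1 g_def by linarith
    ultimately show ?thesis unfolding E_def using degree_diff_le by blast
  qed
  have cE: "coeff E (N + g - 1) = (of_nat g - of_nat N) * coeff G g * coeff r N"
  proof (cases "g = 0")
    case True
    then have "pderiv G = 0" using g_def by (auto elim: degree_eq_zeroE)
    then show ?thesis using c2 True N1 by (simp add: E_def algebra_simps)
  next
    case False
    have c1: "coeff (pderiv G * r) ((g - 1) + N) = (of_nat g * coeff G g) * coeff r N"
      using coeff_mult_bound[OF dpG, of r N] dr False by (simp add: coeff_pderiv)
    have "N + g - 1 = g - 1 + N" "N + g - 1 = g + (N - 1)" using False N1 by auto
    then show ?thesis using c1 c2 by (simp add: E_def algebra_simps)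
  qed
  have "of_nat g - of_nat N \<noteq> (0::'a)"
  proof
    assume "of_nat g - of_nat N = (0::'a)"
    then have "of_nat (Suc (N - g - 1)) = (0::'a)"
      using dG g_def by (simp add: of_nat_diff Suc_diff_Suc)
    then show False using ch by blast
  qed
  moreover have "coeff r N \<noteq> 0" using dr N1
    by (metis leading_coeff_0_iff degree_0 not_one_le_zero)
  moreover have "coeff G g \<noteq> 0" using G0 g_def by simp
  ultimately have nz: "coeff E (N + g - 1) \<noteq> 0" using cE by simp
  then show "pderiv G * r - G * pderiv r \<noteq> 0" unfolding E_def by auto
  show "degree (pderiv G * r - G * pderiv r) = N + degree G - 1"
    using ub le_degree[OF nz] unfolding E_def g_def by simp
qed



lemma poly_sum_le:
  fixes f :: "'a::comm_ring_1 poly"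
  assumes "degree f \<le> N"
  shows "poly f s = (\<Sum>i\<le>N. coeff f i * s ^ i)"
proof -
  have "poly f s = (\<Sum>i\<le>degree f. coeff f i * s ^ i)" by (rule poly_altdef)
  also have "\<dots> = (\<Sum>i\<le>N. coeff f i * s ^ i)"
    by (rule sum.mono_neutral_left) (use assms in \<open>auto simp: coeff_eq_0\<close>)
  finally show ?thesis .
qed

lemma form_eval_fin:
  fixes f :: "'a::field poly"
  assumes "degree f \<le> N" "b \<noteq> 0"
  shows "form_eval N f (a, b) = b ^ N * poly f (a / b)"
proof -
  have "b ^ N * poly f (a / b) = (\<Sum>i\<le>N. b ^ N * (coeff f i * (a / b) ^ i))"
    using poly_sum_le[OF assms(1)] by (simp add: sum_distrib_left)
  also have "\<dots> = (\<Sum>i\<le>N. coeff f i * a ^ i * b ^ (N - i))"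
  proof (rule sum.cong)
    fix i assume "i \<in> {..N}"
    then have "b ^ N = b ^ i * b ^ (N - i)" by (simp add: power_add[symmetric])
    then show "b ^ N * (coeff f i * (a / b) ^ i) = coeff f i * a ^ i * b ^ (N - i)"
      using assms(2) by (simp add: power_divide field_simps)
  qed simp
  finally show ?thesis by (simp add: form_eval_def)
qed

lemma form_eval_inf:
  fixes f :: "'a::field poly"
  assumes "degree f \<le> N"
  shows "form_eval N f (a, 0) = coeff f N * a ^ N"
proof -
  have "form_eval N f (a, 0) = (\<Sum>i\<le>N. coeff f i * a ^ i * 0 ^ (N - i))"
    unfolding form_eval_def by simp
  also have "\<dots> = (\<Sum>i\<in>{N}. coeff f i * a ^ i * 0 ^ (N - i))"
    by (rule sum.mono_neutral_right) auto
  finally have "form_eval N f (a, 0) = (\<Sum>i\<in>{N}. coeff f i * a ^ i * 0 ^ (N - i))" .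
  then show ?thesis by simp
qed

lemma smult_cancel_aux:
  fixes p q :: "'a::field poly"
  assumes "smult a p = smult b q" "a \<noteq> 0"
  shows "p = smult (b / a) q"
proof -
  have "p = smult (inverse a) (smult a p)" using assms(2) by simp
  also have "\<dots> = smult (inverse a * b) q" using assms(1) by simp
  finally show ?thesis by (simp add: divide_inverse mult.commute)
qed

lemma nonprop:
  fixes p q :: "'a::field poly"
  assumes "coprime p q" "max (degree p) (degree q) = N" "N \<ge> 1"
    and "smult \<alpha> p = smult \<beta> q" "\<alpha> \<noteq> 0 \<or> \<beta> \<noteq> 0"
  shows False
proof (cases "\<alpha> \<noteq> 0")
  case True
  have pq: "p = smult (\<beta> / \<alpha>) q" using smult_cancel_aux[OF assms(4) True] .
  have "q dvd p" unfolding pq by (rule dvd_smult[OF dvd_refl])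
  then have "is_unit q" using coprime_common_divisor[OF assms(1)] by simp
  then have "degree q = 0" by (metis is_unit_iff_degree not_is_unit_0)
  moreover have "degree p \<le> degree q" using pq by simp
  ultimately show False using assms(2,3) by simp
next
  case False
  then have "\<beta> \<noteq> 0" using assms(5) by simp
  then have pq: "q = smult (\<alpha> / \<beta>) p" using smult_cancel_aux[OF assms(4)[symmetric]] by blast
  have "p dvd q" unfolding pq by (rule dvd_smult[OF dvd_refl])
  then have "is_unit p" using coprime_common_divisor[OF assms(1)] by simp
  then have "degree p = 0" by (metis is_unit_iff_degree not_is_unit_0)
  moreover have "degree q \<le> degree p" using pq by simp
  ultimately show False using assms(2,3) by simp
qed

lemma coprime_no_common_root:
  fixes p q :: "'a::field poly"
  assumes "coprime p q"
  shows "poly p t \<noteq> 0 \<or> poly q t \<noteq> 0"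
proof (rule ccontr)
  assume "\<not> ?thesis"
  then have "[:-t,1:] dvd p" "[:-t,1:] dvd q" using poly_eq_0_iff_dvd by auto
  then have "is_unit [:-t,1:]" using coprime_common_divisor[OF assms] by simp
  moreover have "degree [:-t,1:] = 1" by simp
  ultimately show False by (metis is_unit_iff_degree not_is_unit_0 one_neq_zero)
qed

lemma core:
  fixes p q :: "'a::field poly"
  assumes ch: "\<And>m. of_nat (Suc m) \<noteq> (0::'a)"
    and rm: "rat_map N p q" and N1: "N \<ge> 1"
  shows "wr p q \<noteq> 0" "degree (wr p q) \<le> 2 * N - 2"
    "\<And>x. x \<noteq> (0, 0) \<Longrightarrow> int (form_ord (2 * N - 2) (wr p q) x) = crit_div N p q x"
proof -
  have cop: "coprime p q" and mx: "max (degree p) (degree q) = N" using rm by (auto simp: rat_map_def)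
  have dp: "degree p \<le> N" and dq: "degree q \<le> N" using mx by auto
  define Gi where "Gi = smult (coeff q N) p - smult (coeff p N) q"
  have Gi0: "Gi \<noteq> 0"
  proof
    assume "Gi = 0"
    then have "smult (coeff q N) p = smult (coeff p N) q" by (simp add: Gi_def)
    moreover have "coeff q N \<noteq> 0 \<or> coeff p N \<noteq> 0" using mx
      by (metis leading_coeff_0_iff degree_0 max_def N1 not_one_le_zero)
    ultimately show False using nonprop[OF cop mx N1] by blast
  qed
  have dGi: "degree Gi < N"
  proof -
    have "degree Gi \<le> N" unfolding Gi_def using dp dq
      by (meson degree_diff_le degree_smult_le order_trans)
    moreover have "coeff Gi N = 0" by (simp add: Gi_def)
    ultimately show ?thesis using Gi0 by (metis le_neq_implies_less leading_coeff_0_iff)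
  qed
  obtain c r where c0: "c \<noteq> 0" and dr: "degree r = N"
    and cr: "smult c (wr p q) = pderiv Gi * r - Gi * pderiv r"
  proof (cases "coeff q N \<noteq> 0")
    case True
    then have "degree q = N" using dq by (simp add: le_antisym le_degree)
    then show ?thesis using that[of "coeff q N" q] True wr_ident1[of "coeff q N" p "coeff p N" q]
      unfolding Gi_def by simp
  next
    case False
    then have "coeff p N \<noteq> 0" using mx
      by (metis leading_coeff_0_iff degree_0 max_def N1 not_one_le_zero)
    then have "degree p = N" using dp by (simp add: le_antisym le_degree)
    then show ?thesis using that[of "coeff p N" p] \<open>coeff p N \<noteq> 0\<close> wr_ident2[of "coeff q N" p "coeff p N" q]
      unfolding Gi_def by simp
  qed
  have dw: "degree (wr p q) = N + degree Gi - 1"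
    using inf_deg(1)[OF ch Gi0 dr dGi] cr[symmetric] c0 by simp
  show "wr p q \<noteq> 0" using inf_deg(2)[OF ch Gi0 dr dGi] cr[symmetric] c0 by auto
  show dW: "degree (wr p q) \<le> 2 * N - 2" using dw dGi by simp
  fix x :: "'a \<times> 'a" assume x0: "x \<noteq> (0, 0)"
  obtain a b where x: "x = (a, b)" by (cases x)
  show "int (form_ord (2 * N - 2) (wr p q) x) = crit_div N p q x"
  proof (cases "b = 0")
    case True
    then have a0: "a \<noteq> 0" using x0 x by simp
    have "local_deg N p q x = N - degree (smult (a ^ N) Gi)"
      unfolding local_deg_def x True form_ord_def using dp dq
      by (simp add: form_eval_inf Gi_def smult_diff_right algebra_simps)
    also have "\<dots> = N - degree Gi" using a0 by simp
    finally have ld: "local_deg N p q x = N - degree Gi" .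
    have "form_ord (2 * N - 2) (wr p q) x = 2 * N - 2 - (N + degree Gi - 1)"
      unfolding form_ord_def x True using dw by simp
    then show ?thesis unfolding crit_div_def ld using dGi by simp
  next
    case False
    define t where "t = a / b"
    define G where "G = smult (poly q t) p - smult (poly p t) q"
    have G0: "G \<noteq> 0"
    proof
      assume "G = 0"
      then have "smult (poly q t) p = smult (poly p t) q" by (simp add: G_def)
      then show False using nonprop[OF cop mx N1] coprime_no_common_root[OF cop, of t] by blast
    qed
    have Gt: "poly G t = 0" by (simp add: G_def)
    have "local_deg N p q x = order t (smult (b ^ N) G)"
      unfolding local_deg_def x form_ord_def using dp dq False
      by (simp add: form_eval_fin G_def t_def smult_diff_right algebra_simps)
    also have "\<dots> = order t G" using False by (simp add: order_smult)
    finally have ld: "local_deg N p q x = order t G" .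
    have oG: "order t G \<ge> 1" using G0 Gt order_root by (metis less_one not_le)
    have ow: "order t (wr p q) = order t G - 1"
    proof (cases "poly q t \<noteq> 0")
      case True
      have "order t (wr p q) = order t (smult (poly q t) (wr p q))" using True by (simp add: order_smult)
      also have "\<dots> = order t (pderiv G * q - G * pderiv q)"
        unfolding G_def wr_ident1 ..
      also have "\<dots> = order t G - 1" by (rule fin_ord(1)[OF ch G0 Gt True])
      finally show ?thesis .
    next
      case False
      then have pt: "poly p t \<noteq> 0" using coprime_no_common_root[OF cop, of t] by simp
      have "order t (wr p q) = order t (smult (poly p t) (wr p q))" using pt by (simp add: order_smult)
      also have "\<dots> = order t (pderiv G * p - G * pderiv p)"
        unfolding G_def wr_ident2 ..
      also have "\<dots> = order t G - 1" by (rule fin_ord(1)[OF ch G0 Gt pt])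
      finally show ?thesis .
    qed
    show ?thesis using False ow oG t_def ld x by (simp add: crit_div_def form_ord_def)
  qed
qed



lemma uf_nbot: "free_ultrafilter w \<Longrightarrow> w \<noteq> bot"
  by (simp add: free_ultrafilter_def)

lemma uf_split: "free_ultrafilter w \<Longrightarrow> eventually P w \<or> eventually (\<lambda>n. \<not> P n) w"
  by (simp add: free_ultrafilter_def)

lemma uf_lim:
  fixes f :: "nat \<Rightarrow> real"
  assumes uf: "free_ultrafilter w" and ev: "eventually (\<lambda>n. a \<le> f n \<and> f n \<le> b) w"
  shows "\<exists>L. (f \<longlongrightarrow> L) w"
proof -
  have nb: "w \<noteq> bot" using uf by (rule uf_nbot)
  define S where "S = {c. eventually (\<lambda>n. f n \<le> c) w}"
  have bS: "b \<in> S" using ev unfolding S_def by (auto elim: eventually_mono)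
  have lb: "a \<le> c" if "c \<in> S" for c
  proof (rule ccontr)
    assume "\<not> a \<le> c"
    have "eventually (\<lambda>n. f n \<le> c) w" using that by (simp add: S_def)
    with ev have "eventually (\<lambda>n. False) w"
      by eventually_elim (use \<open>\<not> a \<le> c\<close> in auto)
    then show False using nb by (simp add: eventually_False)
  qed
  have bdd: "bdd_below S" unfolding bdd_below_def using lb by blast
  define L where "L = Inf S"
  have "(f \<longlongrightarrow> L) w"
  proof (rule order_tendstoI)
    fix y assume "L < y"
    then obtain c where "c \<in> S" "c < y" using cInf_less_iff[of S y] bS bdd L_def by auto
    then show "eventually (\<lambda>n. f n < y) w" by (auto simp: S_def elim: eventually_mono)
  next
    fix y assume yL: "y < L"
    show "eventually (\<lambda>n. y < f n) w"
    proof (rule ccontr)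
      assume "\<not> eventually (\<lambda>n. y < f n) w"
      then have "eventually (\<lambda>n. \<not> y < f n) w" using uf_split[OF uf] by blast
      then have "y \<in> S" by (auto simp: S_def not_less elim: eventually_mono)
      then have "L \<le> y" unfolding L_def using bdd by (rule cInf_lower)
      then show False using yL by simp
    qed
  qed
  then show ?thesis by blast
qed

lemma uf_choice:
  assumes uf: "free_ultrafilter w" and fin: "finite I"
    and ev: "eventually (\<lambda>n. \<exists>i\<in>I. P i n) w"
  shows "\<exists>i\<in>I. eventually (P i) w"
proof (rule ccontr)
  assume "\<not> ?thesis"
  then have "\<forall>i\<in>I. eventually (\<lambda>n. \<not> P i n) w" using uf_split[OF uf] by blast
  then have "eventually (\<lambda>n. \<forall>i\<in>I. \<not> P i n) w" using fin by (simp add: eventually_ball_finite)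
  with ev have "eventually (\<lambda>n. False) w" by eventually_elim auto
  then show False using uf_nbot[OF uf] by (simp add: eventually_False)
qed

lemma uf_disj:
  assumes uf: "free_ultrafilter w" and ev: "eventually (\<lambda>n. P n \<or> Q n) w"
  shows "eventually P w \<or> eventually Q w"
proof (rule ccontr)
  assume "\<not> ?thesis"
  then have "eventually (\<lambda>n. \<not> P n) w" "eventually (\<lambda>n. \<not> Q n) w" using uf_split[OF uf] by blast+
  with ev have "eventually (\<lambda>n. False) w" by eventually_elim auto
  then show False using uf_nbot[OF uf] by (simp add: eventually_False)
qed

lemma Bseq_bound:
  assumes "Bseq (z :: nat \<Rightarrow> complex)"
  obtains K where "K \<ge> 1" "\<And>n. cmod (z n) \<le> K"
proof -
  obtain K where "K > 0" "\<And>n. cmod (z n) \<le> K" using assms unfolding Bseq_def by auto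
  then show ?thesis using that[of "max 1 K"] by (meson max.cobounded1 max.coboundedI2)
qed

lemma powr_bound:
  fixes x K e B :: real
  assumes "0 \<le> x" "x \<le> K" "K \<ge> 1" "0 \<le> e" "e \<le> B"
  shows "x powr e \<le> K powr B"
proof -
  have "x powr e \<le> K powr e" using assms by (simp add: Transcendental.powr_mono2)
  also have "\<dots> \<le> K powr B" using assms by (simp add: Transcendental.powr_mono)
  finally show ?thesis .
qed

lemma Bseq_adm:
  assumes uf: "free_ultrafilter w" and sc: "is_scale eta" and bz: "Bseq z"
  shows "z \<in> admissible w eta"
proof -
  obtain K where K: "K \<ge> 1" "\<And>n. cmod (z n) \<le> K" using bz Bseq_bound by blast
  obtain B where B: "\<And>n. eta n \<le> B" and ep: "\<And>n. eta n > 0" using sc unfolding is_scale_def by auto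
  have "eventually (\<lambda>n. 0 \<le> cmod (z n) powr eta n \<and> cmod (z n) powr eta n \<le> K powr B) w"
  proof (intro always_eventually allI conjI)
    fix n
    show "0 \<le> cmod (z n) powr eta n" by simp
    show "cmod (z n) powr eta n \<le> K powr B"
      using powr_bound[of "cmod (z n)" K "eta n" B] K B[of n] ep[of n] by simp
  qed
  from uf_lim[OF uf this] show ?thesis unfolding admissible_def by blast
qed

definition goodmap :: "nat filter \<Rightarrow> (nat \<Rightarrow> complex) set \<Rightarrow> ((nat \<Rightarrow> complex) \<Rightarrow> 'k::field) \<Rightarrow> bool" where
  "goodmap w A phi \<longleftrightarrow> free_ultrafilter w
    \<and> (\<forall>z\<in>A. \<forall>u\<in>A. phi (\<lambda>n. z n + u n) = phi z + phi u \<and> phi (\<lambda>n. z n * u n) = phi z * phi u)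
    \<and> phi (\<lambda>n. 1) = 1
    \<and> (\<forall>z. Bseq z \<longrightarrow> z \<in> A)
    \<and> (\<forall>z. Bseq z \<longrightarrow> eventually (\<lambda>n. 1 \<le> cmod (z n)) w \<longrightarrow> phi z \<noteq> 0)
    \<and> (\<forall>z u. Bseq z \<longrightarrow> phi z \<noteq> 0 \<longrightarrow> (\<forall>n. cmod (u n) * cmod (z n) \<le> 1) \<longrightarrow> u \<in> A)"

lemma goodmap_phi:
  assumes uf: "free_ultrafilter w" and sc: "is_scale eta"
    and qm: "quotient_map (admissible w eta) (negligible w eta) phi"
  shows "goodmap w (admissible w eta) phi"
proof -
  have nb: "w \<noteq> bot" using uf by (rule uf_nbot)
  have ep: "\<And>n. eta n > 0" using sc unfolding is_scale_def by auto
  have H3: "phi z \<noteq> 0" if bz: "Bseq z" and ev: "eventually (\<lambda>n. 1 \<le> cmod (z n)) w" for z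
  proof
    assume "phi z = 0"
    then have "z \<in> negligible w eta" using qm Bseq_adm[OF uf sc bz] unfolding quotient_map_def by blast
    then have t: "((\<lambda>n. cmod (z n) powr eta n) \<longlongrightarrow> 0) w" by (simp add: negligible_def)
    have "eventually (\<lambda>n. 1 \<le> cmod (z n) powr eta n) w"
      using ev by eventually_elim (use ep in \<open>auto intro: ge_one_powr_ge_zero less_imp_le\<close>)
    then have "1 \<le> (0::real)" using tendsto_lowerbound[OF t] nb by blast
    then show False by simp
  qed
  have H4: "u \<in> admissible w eta" if bz: "Bseq z" and pz: "phi z \<noteq> 0"
    and uz: "\<And>n. cmod (u n) * cmod (z n) \<le> 1" for z u
  proof -
    have za: "z \<in> admissible w eta" using Bseq_adm[OF uf sc bz] .
    then obtain L where L: "((\<lambda>n. cmod (z n) powr eta n) \<longlongrightarrow> L) w" unfolding admissible_def by blast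
    have "z \<notin> negligible w eta" using qm za pz unfolding quotient_map_def by blast
    then have L0: "L \<noteq> 0" using L unfolding negligible_def by auto
    have "L \<ge> 0" using tendsto_lowerbound[OF L _] nb by (simp add: always_eventually)
    then have Lp: "L > 0" using L0 by simp
    have "eventually (\<lambda>n. L / 2 < cmod (z n) powr eta n) w"
      using order_tendstoD(1)[OF L, of "L / 2"] Lp by simp
    then have "eventually (\<lambda>n. 0 \<le> cmod (u n) powr eta n \<and> cmod (u n) powr eta n \<le> 2 / L) w"
    proof eventually_elim
      case (elim n)
      have "cmod (u n) powr eta n * cmod (z n) powr eta n = (cmod (u n) * cmod (z n)) powr eta n"
        by (simp add: powr_mult)
      also have "\<dots> \<le> 1 powr eta n" using uz[of n] ep[of n] by (intro Transcendental.powr_mono2) auto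
      finally have "cmod (u n) powr eta n * cmod (z n) powr eta n \<le> 1" by simp
      moreover have "cmod (u n) powr eta n * (L / 2) \<le> cmod (u n) powr eta n * cmod (z n) powr eta n"
        using elim by (intro mult_left_mono) auto
      ultimately have "cmod (u n) powr eta n * (L / 2) \<le> 1" by linarith
      then show ?case using Lp by (simp add: field_simps)
    qed
    from uf_lim[OF uf this] show ?thesis unfolding admissible_def by blast
  qed
  show ?thesis unfolding goodmap_def using uf qm H3 H4 Bseq_adm[OF uf sc]
    unfolding quotient_map_def by blast
qed



lemma goodmap_psi:
  assumes uf: "free_ultrafilter w" and sc: "is_scale eta"
    and sl: "scale_less w eta (\<lambda>n. 1)"
    and qm: "quotient_map (val_ring w eta) (max_ideal w eta) psi"
  shows "goodmap w (val_ring w eta) psi"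
proof -
  have nb: "w \<noteq> bot" using uf by (rule uf_nbot)
  have ep: "\<And>n. eta n > 0" using sc unfolding is_scale_def by auto
  obtain L0 where L0: "(eta \<longlongrightarrow> L0) w" and nL0: "\<not> (L0 > 0)"
    using sl unfolding scale_less_def scale_le_def scale_equiv_def by auto
  have "L0 \<ge> 0" using tendsto_lowerbound[OF L0, of 0] nb ep
    by (simp add: always_eventually less_imp_le)
  then have eta0: "(eta \<longlongrightarrow> 0) w" using L0 nL0 by simp
  have m0: "((\<lambda>n. min 1 (eta n)) \<longlongrightarrow> 0) w"
    using tendsto_min[OF tendsto_const eta0, of 1] by simp
  have evlt: "eventually (\<lambda>n. eta n < 1) w" using order_tendstoD(2)[OF eta0, of 1] by simp
  have VB: "z \<in> val_ring w eta" if bz: "Bseq z" for z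
  proof -
    obtain K where K: "K \<ge> 1" "\<And>n. cmod (z n) \<le> K" using bz Bseq_bound by blast
    have "eventually (\<lambda>n. 0 \<le> cmod (z n) powr min 1 (eta n) \<and> cmod (z n) powr min 1 (eta n) \<le> K powr 1) w"
    proof (intro always_eventually allI conjI)
      fix n
      show "0 \<le> cmod (z n) powr min 1 (eta n)" by simp
      show "cmod (z n) powr min 1 (eta n) \<le> K powr 1"
        using powr_bound[of "cmod (z n)" K "min 1 (eta n)" 1] K ep[of n] by simp
    qed
    from uf_lim[OF uf this] obtain L where L: "((\<lambda>n. cmod (z n) powr min 1 (eta n)) \<longlongrightarrow> L) w" by blast
    have Kt: "((\<lambda>n. K powr min 1 (eta n)) \<longlongrightarrow> K powr 0) w"
      using tendsto_powr[OF tendsto_const m0, of K] K by simp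
    have "eventually (\<lambda>n. cmod (z n) powr min 1 (eta n) \<le> K powr min 1 (eta n)) w"
      using K ep by (intro always_eventually allI) (simp add: Transcendental.powr_mono2 less_imp_le)
    then have "L \<le> K powr 0" using tendsto_le[OF _ Kt L] nb by simp
    then have "L \<le> 1" using K by simp
    then show ?thesis using L Bseq_adm[OF uf sc bz] unfolding val_ring_def by blast
  qed
  have H3: "psi z \<noteq> 0" if bz: "Bseq z" and ev: "eventually (\<lambda>n. 1 \<le> cmod (z n)) w" for z
  proof
    assume "psi z = 0"
    then have "z \<in> max_ideal w eta" using qm VB[OF bz] unfolding quotient_map_def by blast
    then obtain L where L1: "L < 1" and t: "((\<lambda>n. cmod (z n) powr min 1 (eta n)) \<longlongrightarrow> L) w"
      unfolding max_ideal_def by blast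
    have "eventually (\<lambda>n. 1 \<le> cmod (z n) powr min 1 (eta n)) w"
      using ev
    proof eventually_elim
      case (elim n)
      have "0 \<le> min 1 (eta n)" using ep[of n] by simp
      then show ?case using elim by (rule ge_one_powr_ge_zero[rotated])
    qed
    then have "1 \<le> L" using tendsto_lowerbound[OF t] nb by blast
    then show False using L1 by simp
  qed
  have H4: "u \<in> val_ring w eta" if bz: "Bseq z" and pz: "psi z \<noteq> 0"
    and uz: "\<And>n. cmod (u n) * cmod (z n) \<le> 1" for z u
  proof -
    have zv: "z \<in> val_ring w eta" using VB[OF bz] .
    then obtain L where L: "((\<lambda>n. cmod (z n) powr min 1 (eta n)) \<longlongrightarrow> L) w"
      unfolding val_ring_def by blast
    have "z \<notin> max_ideal w eta" using qm zv pz unfolding quotient_map_def by blast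
    then have "\<not> (\<exists>L. L < 1 \<and> ((\<lambda>n. cmod (z n) powr min 1 (eta n)) \<longlongrightarrow> L) w)"
      using zv unfolding max_ideal_def val_ring_def by blast
    then have L1: "L \<ge> 1" using L by (meson not_le)
    then have Lp: "L > 0" by simp
    have "eventually (\<lambda>n. L / 2 < cmod (z n) powr min 1 (eta n)) w"
      using order_tendstoD(1)[OF L, of "L / 2"] Lp by simp
    then have ev2: "eventually (\<lambda>n. 0 < cmod (z n) powr min 1 (eta n) \<and>
        0 \<le> cmod (u n) powr min 1 (eta n) \<and> cmod (u n) powr min 1 (eta n) \<le> 2 / L \<and>
        cmod (u n) powr min 1 (eta n) \<le> 1 / cmod (z n) powr min 1 (eta n)) w"
    proof eventually_elim
      case (elim n)
      have pos: "0 < cmod (z n) powr min 1 (eta n)" using elim Lp by linarith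
      have "cmod (u n) powr min 1 (eta n) * cmod (z n) powr min 1 (eta n) = (cmod (u n) * cmod (z n)) powr min 1 (eta n)"
        by (simp add: powr_mult)
      also have "\<dots> \<le> 1 powr min 1 (eta n)" using uz[of n] ep[of n] by (intro Transcendental.powr_mono2) auto
      finally have a: "cmod (u n) powr min 1 (eta n) * cmod (z n) powr min 1 (eta n) \<le> 1" by simp
      moreover have "cmod (u n) powr min 1 (eta n) * (L / 2) \<le> cmod (u n) powr min 1 (eta n) * cmod (z n) powr min 1 (eta n)"
        using elim by (intro mult_left_mono) auto
      ultimately have "cmod (u n) powr min 1 (eta n) * (L / 2) \<le> 1" by linarith
      then have b: "cmod (u n) powr min 1 (eta n) \<le> 2 / L" using Lp by (simp add: field_simps)
      have c: "cmod (u n) powr min 1 (eta n) \<le> 1 / cmod (z n) powr min 1 (eta n)"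
        using a pos by (simp add: field_simps)
      show ?case using pos b c by simp
    qed
    from ev2 have "eventually (\<lambda>n. 0 \<le> cmod (u n) powr min 1 (eta n) \<and> cmod (u n) powr min 1 (eta n) \<le> 2 / L) w"
      by (auto elim: eventually_mono)
    from uf_lim[OF uf this] obtain L' where L': "((\<lambda>n. cmod (u n) powr min 1 (eta n)) \<longlongrightarrow> L') w" by blast
    have inv: "((\<lambda>n. 1 / cmod (z n) powr min 1 (eta n)) \<longlongrightarrow> 1 / L) w"
      using tendsto_divide[OF tendsto_const L, of 1] Lp by simp
    have ev3: "eventually (\<lambda>n. cmod (u n) powr min 1 (eta n) \<le> 1 / cmod (z n) powr min 1 (eta n)) w"
      using ev2 by (rule eventually_mono) blast
    have "L' \<le> 1 / L" using tendsto_le[OF _ inv L' ev3] nb by simp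
    also have "\<dots> \<le> 1" using L1 by simp
    finally have L'1: "L' \<le> 1" .
    have "eventually (\<lambda>n. 0 \<le> cmod (u n) powr eta n \<and> cmod (u n) powr eta n \<le> 2 / L) w"
      using ev2 evlt by eventually_elim auto
    from uf_lim[OF uf this] have "u \<in> admissible w eta" unfolding admissible_def by blast
    then show ?thesis using L' L'1 unfolding val_ring_def by blast
  qed
  show ?thesis unfolding goodmap_def using uf qm H3 H4 VB
    unfolding quotient_map_def by blast
qed



lemma Bseq_constc: "Bseq (\<lambda>n. c :: complex)"
  by (rule BseqI'[of _ "cmod c"]) simp

lemma Bseq_plus:
  fixes f g :: "nat \<Rightarrow> complex"
  assumes "Bseq f" "Bseq g" shows "Bseq (\<lambda>n. f n + g n)"
proof -
  obtain K1 where "\<And>n. cmod (f n) \<le> K1" using assms(1) Bseq_bound by blast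
  moreover obtain K2 where "\<And>n. cmod (g n) \<le> K2" using assms(2) Bseq_bound by blast
  ultimately have "\<And>n. cmod (f n + g n) \<le> K1 + K2"
    by (meson add_mono norm_triangle_ineq order_trans)
  then show ?thesis by (rule BseqI')
qed

lemma Bseq_neg: "Bseq (f :: nat \<Rightarrow> complex) \<Longrightarrow> Bseq (\<lambda>n. - f n)"
  using Bseq_minus_iff by blast

lemma Bseq_diff:
  fixes f g :: "nat \<Rightarrow> complex"
  assumes "Bseq f" "Bseq g" shows "Bseq (\<lambda>n. f n - g n)"
  using Bseq_plus[OF assms(1) Bseq_neg[OF assms(2)]] by simp

lemma Bseq_times:
  fixes f g :: "nat \<Rightarrow> complex"
  assumes "Bseq f" "Bseq g" shows "Bseq (\<lambda>n. f n * g n)"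
  using Bseq_mult[OF assms] .

lemma Bseq_sumI:
  fixes f :: "'i \<Rightarrow> nat \<Rightarrow> complex"
  assumes "finite I" "\<And>i. i \<in> I \<Longrightarrow> Bseq (f i)"
  shows "Bseq (\<lambda>n. \<Sum>i\<in>I. f i n)"
  using assms
proof (induction I rule: finite_induct)
  case empty then show ?case using Bseq_constc[of 0] by simp
next
  case (insert x F)
  then show ?case using Bseq_plus[of "f x" "\<lambda>n. \<Sum>i\<in>F. f i n"] by simp
qed

definition cb :: "(nat \<Rightarrow> complex poly) \<Rightarrow> bool" where
  "cb F \<longleftrightarrow> (\<forall>i. Bseq (\<lambda>n. coeff (F n) i))"

context
  fixes w A and phi :: "(nat \<Rightarrow> complex) \<Rightarrow> 'k::field"
  assumes gm: "goodmap w A phi"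
begin

lemma gm_uf: "free_ultrafilter w" using gm by (simp add: goodmap_def)
lemma gm_A: "Bseq z \<Longrightarrow> z \<in> A" using gm by (simp add: goodmap_def)
lemma gm_addA: "z \<in> A \<Longrightarrow> u \<in> A \<Longrightarrow> phi (\<lambda>n. z n + u n) = phi z + phi u"
  using gm by (simp add: goodmap_def)
lemma gm_multA: "z \<in> A \<Longrightarrow> u \<in> A \<Longrightarrow> phi (\<lambda>n. z n * u n) = phi z * phi u"
  using gm by (simp add: goodmap_def)
lemma gm_one: "phi (\<lambda>n. 1) = 1" using gm by (simp add: goodmap_def)
lemma gm_nz: "Bseq z \<Longrightarrow> eventually (\<lambda>n. 1 \<le> cmod (z n)) w \<Longrightarrow> phi z \<noteq> 0"
  using gm by (simp add: goodmap_def)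
lemma gm_unit: "Bseq z \<Longrightarrow> phi z \<noteq> 0 \<Longrightarrow> (\<And>n. cmod (u n) * cmod (z n) \<le> 1) \<Longrightarrow> u \<in> A"
  using gm by (simp add: goodmap_def)

lemma gm_add: "Bseq z \<Longrightarrow> Bseq u \<Longrightarrow> phi (\<lambda>n. z n + u n) = phi z + phi u"
  by (simp add: gm_A gm_addA)
lemma gm_mult: "Bseq z \<Longrightarrow> Bseq u \<Longrightarrow> phi (\<lambda>n. z n * u n) = phi z * phi u"
  by (simp add: gm_A gm_multA)

lemma gm_zero: "phi (\<lambda>n. 0) = 0"
proof -
  have "phi (\<lambda>n. 0 + 0) = phi (\<lambda>n. 0) + phi (\<lambda>n. 0)" using gm_add[OF Bseq_constc Bseq_constc] .
  then have "phi (\<lambda>n. 0) = phi (\<lambda>n. 0) + phi (\<lambda>n. 0)" by simp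
  then show ?thesis by (metis add_cancel_right_right)
qed

lemma gm_neg: "Bseq z \<Longrightarrow> phi (\<lambda>n. - z n) = - phi z"
proof -
  assume b: "Bseq z"
  have "phi (\<lambda>n. z n + - z n) = phi z + phi (\<lambda>n. - z n)" using gm_add[OF b Bseq_neg[OF b]] .
  then have "phi z + phi (\<lambda>n. - z n) = 0" using gm_zero by simp
  then show ?thesis by (simp add: eq_neg_iff_add_eq_0 add.commute)
qed

lemma gm_diff: "Bseq z \<Longrightarrow> Bseq u \<Longrightarrow> phi (\<lambda>n. z n - u n) = phi z - phi u"
  using gm_add[of z "\<lambda>n. - u n"] gm_neg[of u] Bseq_neg[of u] by simp

lemma gm_sum:
  fixes f :: "'i \<Rightarrow> nat \<Rightarrow> complex"
  assumes "finite I" "\<And>i. i \<in> I \<Longrightarrow> Bseq (f i)"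
  shows "phi (\<lambda>n. \<Sum>i\<in>I. f i n) = (\<Sum>i\<in>I. phi (f i))"
  using assms
proof (induction I rule: finite_induct)
  case empty then show ?case using gm_zero by simp
next
  case (insert x F)
  have "phi (\<lambda>n. \<Sum>i\<in>insert x F. f i n) = phi (\<lambda>n. f x n + (\<Sum>i\<in>F. f i n))"
    using insert by simp
  also have "\<dots> = phi (f x) + phi (\<lambda>n. \<Sum>i\<in>F. f i n)"
    using insert by (intro gm_add Bseq_sumI) auto
  finally show ?case using insert by simp
qed

lemma gm_nat: "phi (\<lambda>n. of_nat m) = of_nat m"
proof (induction m)
  case 0 then show ?case using gm_zero by simp
next
  case (Suc m)
  have "phi (\<lambda>n. of_nat (Suc m)) = phi (\<lambda>n. of_nat m + 1)" by (simp add: add.commute)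
  also have "\<dots> = phi (\<lambda>n. of_nat m) + phi (\<lambda>n. 1)" by (rule gm_add[OF Bseq_constc Bseq_constc])
  finally show ?case using Suc gm_one by simp
qed

lemma gm_char0: "of_nat (Suc m) \<noteq> (0::'k)"
proof -
  have "phi (\<lambda>n. of_nat (Suc m)) \<noteq> 0"
  proof (rule gm_nz[OF Bseq_constc])
    have "cmod (of_nat (Suc m) :: complex) = real (Suc m)" by (rule norm_of_nat)
    then show "\<forall>\<^sub>F n in w. 1 \<le> cmod (of_nat (Suc m) :: complex)" by (simp add: always_eventually del: of_nat_Suc)
  qed
  then show ?thesis using gm_nat by metis
qed

lemma coeff_lim:
  assumes "\<And>n. degree (F n) \<le> N"
  shows "coeff (lim_form phi N F) i = phi (\<lambda>n. coeff (F n) i)"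
proof -
  have "coeff (lim_form phi N F) i = (\<Sum>j\<le>N. if j = i then phi (\<lambda>n. coeff (F n) j) else 0)"
    unfolding lim_form_def coeff_sum by simp
  also have "\<dots> = (if i \<le> N then phi (\<lambda>n. coeff (F n) i) else 0)"
    by (simp add: sum.delta)
  also have "\<dots> = phi (\<lambda>n. coeff (F n) i)"
  proof (cases "i \<le> N")
    case False
    then have "(\<lambda>n. coeff (F n) i) = (\<lambda>n. 0)" using assms by (intro ext coeff_eq_0) (meson le_less_trans not_le)
    then show ?thesis using False gm_zero by simp
  qed simp
  finally show ?thesis .
qed

lemma lim_bound:
  assumes "\<And>n. degree (F n) \<le> N" "N \<le> M"
  shows "lim_form phi M F = lim_form phi N F"
proof -
  have "\<And>n. degree (F n) \<le> M" using assms order_trans by blast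
  then show ?thesis using coeff_lim assms(1) by (intro poly_eqI) simp
qed

lemma lim_mult:
  assumes dF: "\<And>n. degree (F n) \<le> a" and dG: "\<And>n. degree (G n) \<le> b" and "cb F" "cb G"
  shows "lim_form phi (a + b) (\<lambda>n. F n * G n) = lim_form phi a F * lim_form phi b G"
proof (rule poly_eqI)
  fix i
  have d: "\<And>n. degree (F n * G n) \<le> a + b"
    using dF dG by (meson add_mono degree_mult_le order_trans)
  have bs: "\<And>j. Bseq (\<lambda>n. coeff (F n) j)" "\<And>j. Bseq (\<lambda>n. coeff (G n) j)"
    using assms(3,4) by (auto simp: cb_def)
  have "coeff (lim_form phi (a + b) (\<lambda>n. F n * G n)) i = phi (\<lambda>n. coeff (F n * G n) i)"
    by (rule coeff_lim[OF d])
  also have "\<dots> = phi (\<lambda>n. \<Sum>j\<le>i. coeff (F n) j * coeff (G n) (i - j))"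
    by (simp add: coeff_mult)
  also have "\<dots> = (\<Sum>j\<le>i. phi (\<lambda>n. coeff (F n) j * coeff (G n) (i - j)))"
    by (rule gm_sum) (auto intro: Bseq_times bs)
  also have "\<dots> = (\<Sum>j\<le>i. phi (\<lambda>n. coeff (F n) j) * phi (\<lambda>n. coeff (G n) (i - j)))"
    by (rule sum.cong) (auto intro: gm_mult bs)
  also have "\<dots> = coeff (lim_form phi a F * lim_form phi b G) i"
    by (simp add: coeff_mult coeff_lim[OF dF] coeff_lim[OF dG])
  finally show "coeff (lim_form phi (a + b) (\<lambda>n. F n * G n)) i = coeff (lim_form phi a F * lim_form phi b G) i" .
qed

lemma lim_diff:
  assumes dF: "\<And>n. degree (F n) \<le> N" and dG: "\<And>n. degree (G n) \<le> N" and "cb F" "cb G"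
  shows "lim_form phi N (\<lambda>n. F n - G n) = lim_form phi N F - lim_form phi N G"
proof (rule poly_eqI)
  fix i
  have d: "\<And>n. degree (F n - G n) \<le> N" using dF dG by (meson degree_diff_le)
  have bs: "\<And>j. Bseq (\<lambda>n. coeff (F n) j)" "\<And>j. Bseq (\<lambda>n. coeff (G n) j)"
    using assms(3,4) by (auto simp: cb_def)
  show "coeff (lim_form phi N (\<lambda>n. F n - G n)) i = coeff (lim_form phi N F - lim_form phi N G) i"
    by (simp add: coeff_lim[OF d] coeff_lim[OF dF] coeff_lim[OF dG] gm_diff bs)
qed

lemma lim_pderiv:
  assumes dF: "\<And>n. degree (F n) \<le> N" and "cb F"
  shows "lim_form phi N (\<lambda>n. pderiv (F n)) = pderiv (lim_form phi N F)"
proof (rule poly_eqI)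
  fix i
  have d: "\<And>n. degree (pderiv (F n)) \<le> N" using dF by (simp add: degree_pderiv) (meson diff_le_self order_trans)
  have bs: "\<And>j. Bseq (\<lambda>n. coeff (F n) j)" using assms(2) by (auto simp: cb_def)
  have "coeff (lim_form phi N (\<lambda>n. pderiv (F n))) i = phi (\<lambda>n. of_nat (Suc i) * coeff (F n) (Suc i))"
    by (simp add: coeff_lim[OF d] coeff_pderiv)
  also have "\<dots> = of_nat (Suc i) * phi (\<lambda>n. coeff (F n) (Suc i))"
    using gm_mult[OF Bseq_constc bs, of "of_nat (Suc i)" "Suc i"] gm_nat[of "Suc i"] by (simp del: of_nat_Suc)
  finally show "coeff (lim_form phi N (\<lambda>n. pderiv (F n))) i = coeff (pderiv (lim_form phi N F)) i"
    by (simp add: coeff_pderiv coeff_lim[OF dF])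
qed

end

lemma cb_mult: "cb F \<Longrightarrow> cb G \<Longrightarrow> cb (\<lambda>n. F n * G n)"
  unfolding cb_def coeff_mult by (auto intro!: Bseq_sumI Bseq_times)

lemma cb_diff: "cb F \<Longrightarrow> cb G \<Longrightarrow> cb (\<lambda>n. F n - G n)"
  unfolding cb_def by (auto intro!: Bseq_diff)

lemma cb_pderiv: "cb F \<Longrightarrow> cb (\<lambda>n. pderiv (F n))"
  unfolding cb_def coeff_pderiv by (auto intro!: Bseq_times Bseq_constc)




lemma np_bound:
  assumes "normalized_pair N p q"
  shows "cmod (coeff p i) \<le> 1" "cmod (coeff q i) \<le> 1"
proof -
  have dp: "degree p \<le> N" "degree q \<le> N" and mx: "Max ((\<lambda>i. max (cmod (coeff p i)) (cmod (coeff q i))) ` {..N}) = 1"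
    using assms by (auto simp: normalized_pair_def)
  have "max (cmod (coeff p i)) (cmod (coeff q i)) \<le> 1"
  proof (cases "i \<le> N")
    case True
    then have "max (cmod (coeff p i)) (cmod (coeff q i)) \<le> Max ((\<lambda>i. max (cmod (coeff p i)) (cmod (coeff q i))) ` {..N})"
      by (intro Max_ge) auto
    then show ?thesis using mx by simp
  next
    case False
    then show ?thesis using dp by (simp add: coeff_eq_0)
  qed
  then show "cmod (coeff p i) \<le> 1" "cmod (coeff q i) \<le> 1" by auto
qed

lemma np_one:
  assumes "normalized_pair N p q"
  shows "\<exists>i\<in>{..N}. cmod (coeff p i) = 1 \<or> cmod (coeff q i) = 1"
proof -
  have mx: "Max ((\<lambda>i. max (cmod (coeff p i)) (cmod (coeff q i))) ` {..N}) = 1"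
    using assms by (auto simp: normalized_pair_def)
  have "Max ((\<lambda>i. max (cmod (coeff p i)) (cmod (coeff q i))) ` {..N}) \<in> (\<lambda>i. max (cmod (coeff p i)) (cmod (coeff q i))) ` {..N}"
    by (intro Max_in) auto
  then obtain i where "i \<in> {..N}" "max (cmod (coeff p i)) (cmod (coeff q i)) = 1" using mx by auto
  then show ?thesis by (auto simp: max_def split: if_splits)
qed

lemma nf_bound:
  assumes "normalized_form N f"
  shows "cmod (coeff f i) \<le> 1"
proof -
  have dp: "degree f \<le> N" and mx: "Max ((\<lambda>i. cmod (coeff f i)) ` {..N}) = 1"
    using assms by (auto simp: normalized_form_def)
  show ?thesis
  proof (cases "i \<le> N")
    case True
    then have "cmod (coeff f i) \<le> Max ((\<lambda>i. cmod (coeff f i)) ` {..N})"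
      by (intro Max_ge) auto
    then show ?thesis using mx by simp
  next
    case False
    then show ?thesis using dp by (simp add: coeff_eq_0)
  qed
qed

lemma nf_one:
  assumes "normalized_form N f"
  shows "\<exists>i\<in>{..N}. cmod (coeff f i) = 1"
proof -
  have mx: "Max ((\<lambda>i. cmod (coeff f i)) ` {..N}) = 1"
    using assms by (auto simp: normalized_form_def)
  have "Max ((\<lambda>i. cmod (coeff f i)) ` {..N}) \<in> (\<lambda>i. cmod (coeff f i)) ` {..N}"
    by (intro Max_in) auto
  then show ?thesis using mx by auto
qed

lemma prop_complex:
  fixes p q :: "complex poly"
  assumes p0: "p \<noteq> 0" and q0: "q \<noteq> 0" and ord: "\<And>t. order t p = order t q"
  shows "p = smult (lead_coeff p / lead_coeff q) q"
proof -
  have rs: "{z. poly p z = 0} = {z. poly q z = 0}"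
  proof (intro Collect_cong)
    fix z
    show "poly p z = 0 \<longleftrightarrow> poly q z = 0"
      using order_root[of p z] order_root[of q z] ord[of z] p0 q0 by simp
  qed
  define Pi where "Pi = (\<Prod>z|poly q z = 0. [:-z, 1:] ^ order z q)"
  have hp: "p = smult (lead_coeff p) Pi"
    using complex_poly_decompose[of p] unfolding Pi_def rs ord by simp
  have hq: "q = smult (lead_coeff q) Pi"
    using complex_poly_decompose[of q] unfolding Pi_def by simp
  have "lead_coeff q \<noteq> 0" using q0 by simp
  then have "smult (lead_coeff p / lead_coeff q) q = smult (lead_coeff p) Pi"
    by (subst hq) simp
  then show ?thesis using hp by simp
qed

lemma lim_nonzero_pair:
  fixes phi :: "(nat \<Rightarrow> complex) \<Rightarrow> 'k::field"
  assumes gm: "goodmap w A phi"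
    and np: "\<And>n. normalized_pair d (P n) (Q n)"
  shows "lim_form phi d P \<noteq> 0 \<or> lim_form phi d Q \<noteq> 0"
proof -
  have uf: "free_ultrafilter w" using gm_uf[OF gm] .
  have dP: "\<And>n. degree (P n) \<le> d" and dQ: "\<And>n. degree (Q n) \<le> d"
    using np by (auto simp: normalized_pair_def)
  have "eventually (\<lambda>n. \<exists>i\<in>{..d}. cmod (coeff (P n) i) = 1 \<or> cmod (coeff (Q n) i) = 1) w"
    using np_one[OF np] by (simp add: always_eventually)
  from uf_choice[OF uf _ this] obtain i where i: "i \<in> {..d}"
    and ev: "eventually (\<lambda>n. cmod (coeff (P n) i) = 1 \<or> cmod (coeff (Q n) i) = 1) w" by auto
  have bP: "Bseq (\<lambda>n. coeff (P n) i)" using np_bound(1)[OF np] by (intro BseqI'[of _ 1]) auto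
  have bQ: "Bseq (\<lambda>n. coeff (Q n) i)" using np_bound(2)[OF np] by (intro BseqI'[of _ 1]) auto
  from uf_disj[OF uf ev] show ?thesis
  proof
    assume "eventually (\<lambda>n. cmod (coeff (P n) i) = 1) w"
    then have "phi (\<lambda>n. coeff (P n) i) \<noteq> 0" by (intro gm_nz[OF gm bP]) (auto elim: eventually_mono)
    then have "coeff (lim_form phi d P) i \<noteq> 0" using coeff_lim[OF gm dP] by simp
    then show ?thesis by auto
  next
    assume "eventually (\<lambda>n. cmod (coeff (Q n) i) = 1) w"
    then have "phi (\<lambda>n. coeff (Q n) i) \<noteq> 0" by (intro gm_nz[OF gm bQ]) (auto elim: eventually_mono)
    then have "coeff (lim_form phi d Q) i \<noteq> 0" using coeff_lim[OF gm dQ] by simp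
    then show ?thesis by auto
  qed
qed

lemma lim_nonzero_form:
  fixes phi :: "(nat \<Rightarrow> complex) \<Rightarrow> 'k::field"
  assumes gm: "goodmap w A phi"
    and nf: "\<And>n. normalized_form N (F n)"
  shows "lim_form phi N F \<noteq> 0"
proof -
  have uf: "free_ultrafilter w" using gm_uf[OF gm] .
  have dF: "\<And>n. degree (F n) \<le> N" using nf by (auto simp: normalized_form_def)
  have "eventually (\<lambda>n. \<exists>i\<in>{..N}. cmod (coeff (F n) i) = 1) w"
    using nf_one[OF nf] by (simp add: always_eventually)
  from uf_choice[OF uf _ this] obtain i where i: "i \<in> {..N}"
    and ev: "eventually (\<lambda>n. cmod (coeff (F n) i) = 1) w" by auto
  have bF: "Bseq (\<lambda>n. coeff (F n) i)" using nf_bound[OF nf] by (intro BseqI'[of _ 1]) auto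
  have "phi (\<lambda>n. coeff (F n) i) \<noteq> 0" using ev by (intro gm_nz[OF gm bF]) (auto elim: eventually_mono)
  then have "coeff (lim_form phi N F) i \<noteq> 0" using coeff_lim[OF gm dF] by simp
  then show ?thesis by auto
qed



lemma abstract_main:
  fixes phi :: "(nat \<Rightarrow> complex) \<Rightarrow> 'k::field"
  assumes gm: "goodmap w A phi" and d1: "d \<ge> 1"
    and rm: "\<And>n. rat_map d (P n) (Q n)"
    and np: "\<And>n. normalized_pair d (P n) (Q n)"
    and nf: "\<And>n. normalized_form (2 * d - 2) (F n)"
    and cr: "\<And>n x. x \<noteq> (0, 0) \<Longrightarrow> int (form_ord (2 * d - 2) (F n) x) = crit_div d (P n) (Q n) x"
  shows "crit_limit_formula phi d P Q F"
proof -
  define M where "M = 2 * d - 2"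
  have ch: "\<And>m. of_nat (Suc m) \<noteq> (0::'k)" using gm_char0[OF gm] .
  have chc: "\<And>m. of_nat (Suc m) \<noteq> (0::complex)" by (simp del: of_nat_Suc)
  define W where "W n = wr (P n) (Q n)" for n
  have W0: "\<And>n. W n \<noteq> 0" and dW: "\<And>n. degree (W n) \<le> M"
    and oW: "\<And>n x. x \<noteq> (0, 0) \<Longrightarrow> int (form_ord M (W n) x) = crit_div d (P n) (Q n) x"
    using core[OF chc rm d1] unfolding W_def M_def by auto
  have dP: "\<And>n. degree (P n) \<le> d" and dQ: "\<And>n. degree (Q n) \<le> d"
    using np by (auto simp: normalized_pair_def)
  have dF: "\<And>n. degree (F n) \<le> M" using nf by (auto simp: normalized_form_def M_def)
  have cbP: "cb P" unfolding cb_def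
  proof
    fix i show "Bseq (\<lambda>n. coeff (P n) i)" by (rule BseqI'[of _ 1]) (rule np_bound(1)[OF np])
  qed
  have cbQ: "cb Q" unfolding cb_def
  proof
    fix i show "Bseq (\<lambda>n. coeff (Q n) i)" by (rule BseqI'[of _ 1]) (rule np_bound(2)[OF np])
  qed
  have cbW: "cb W" unfolding W_def wr_def
    by (intro cb_diff cb_mult cb_pderiv cbP cbQ)
  define lam where "lam n = lead_coeff (F n) / lead_coeff (W n)" for n
  have Fprop: "F n = smult (lam n) (W n)" for n
  proof -
    have F0: "F n \<noteq> 0" using nf_one[OF nf, of n] by auto
    have "order t (F n) = order t (W n)" for t
    proof -
      have "(t, 1) \<noteq> ((0::complex), (0::complex))" by simp
      from cr[OF this, of n] oW[OF this, of n] show ?thesis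
        unfolding M_def form_ord_def by simp
    qed
    then show ?thesis unfolding lam_def by (rule prop_complex[OF F0 W0])
  qed
  show ?thesis unfolding crit_limit_formula_def
  proof (intro allI impI)
    fix k e h ph qh and x :: "'k \<times> 'k"
    assume H: "k + e = d \<and> degree h \<le> k \<and> lim_form phi d P = h * ph \<and> lim_form phi d Q = h * qh
       \<and> rat_map e ph qh \<and> 1 \<le> e"
    assume x0: "x \<noteq> (0, 0)"
    have ke: "k + e = d" and dh: "degree h \<le> k" and LPh: "lim_form phi d P = h * ph"
      and LQh: "lim_form phi d Q = h * qh" and rme: "rat_map e ph qh" and e1: "1 \<le> e"
      using H by auto
    have Wh0: "wr ph qh \<noteq> 0" and dWh: "degree (wr ph qh) \<le> 2 * e - 2"
      and oWh: "\<And>x. x \<noteq> (0, 0) \<Longrightarrow> int (form_ord (2 * e - 2) (wr ph qh) x) = crit_div e ph qh x"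
      using core[OF ch rme e1] by auto
    have h0: "h \<noteq> 0" using lim_nonzero_pair[OF gm np] LPh LQh by auto
    have dPd: "\<And>n. degree (pderiv (P n)) \<le> d" using dP by (simp add: degree_pderiv) (meson diff_le_self order_trans)
    have dQd: "\<And>n. degree (pderiv (Q n)) \<le> d" using dQ by (simp add: degree_pderiv) (meson diff_le_self order_trans)
    have m1: "lim_form phi (d + d) (\<lambda>n. pderiv (P n) * Q n) = pderiv (lim_form phi d P) * lim_form phi d Q"
      using lim_mult[OF gm dPd dQ cb_pderiv[OF cbP] cbQ] lim_pderiv[OF gm dP cbP] by simp
    have m2: "lim_form phi (d + d) (\<lambda>n. P n * pderiv (Q n)) = lim_form phi d P * pderiv (lim_form phi d Q)"
      using lim_mult[OF gm dP dQd cbP cb_pderiv[OF cbQ]] lim_pderiv[OF gm dQ cbQ] by simp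
    have d1': "\<And>n. degree (pderiv (P n) * Q n) \<le> d + d"
      using dPd dQ by (meson add_mono degree_mult_le order_trans)
    have d2': "\<And>n. degree (P n * pderiv (Q n)) \<le> d + d"
      using dP dQd by (meson add_mono degree_mult_le order_trans)
    have "lim_form phi (d + d) W = lim_form phi (d + d) (\<lambda>n. pderiv (P n) * Q n) - lim_form phi (d + d) (\<lambda>n. P n * pderiv (Q n))"
      unfolding W_def wr_def
      by (rule lim_diff[OF gm d1' d2' cb_mult[OF cb_pderiv[OF cbP] cbQ] cb_mult[OF cbP cb_pderiv[OF cbQ]]])
    also have "\<dots> = wr (lim_form phi d P) (lim_form phi d Q)" unfolding m1 m2 wr_def ..
    also have "\<dots> = h ^ 2 * wr ph qh" unfolding LPh LQh wr_def
      by (simp add: pderiv_mult power2_eq_square algebra_simps)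
    finally have LW2: "lim_form phi (d + d) W = h ^ 2 * wr ph qh" .
    have "lim_form phi (d + d) W = lim_form phi M W"
      using lim_bound[OF gm dW, of "d + d"] M_def by simp
    with LW2 have LW: "lim_form phi M W = h ^ 2 * wr ph qh" by simp
    have LW0: "lim_form phi M W \<noteq> 0" unfolding LW using h0 Wh0 by simp
    define j where "j = degree (lim_form phi M W)"
    have "coeff (lim_form phi M W) j \<noteq> 0" using LW0 unfolding j_def by simp
    then have pWj: "phi (\<lambda>n. coeff (W n) j) \<noteq> 0" using coeff_lim[OF gm dW] by simp
    have bW: "\<And>i. Bseq (\<lambda>n. coeff (W n) i)" using cbW by (simp add: cb_def)
    have lamA: "lam \<in> A"
    proof (rule gm_unit[OF gm bW pWj])
      fix n
      have "cmod (lam n) * cmod (coeff (W n) j) = cmod (coeff (F n) j)"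
        by (subst Fprop) (simp add: norm_mult)
      then show "cmod (lam n) * cmod (coeff (W n) j) \<le> 1" using nf_bound[OF nf] by simp
    qed
    have LF: "lim_form phi M F = smult (phi lam) (lim_form phi M W)"
    proof (rule poly_eqI)
      fix i
      have "coeff (lim_form phi M F) i = phi (\<lambda>n. lam n * coeff (W n) i)"
      proof -
        have "(\<lambda>n. coeff (F n) i) = (\<lambda>n. lam n * coeff (W n) i)"
          by (rule ext) (subst Fprop, simp)
        then show ?thesis using coeff_lim[OF gm dF, where i=i] by simp
      qed
      also have "\<dots> = phi lam * phi (\<lambda>n. coeff (W n) i)"
        using gm_multA[OF gm lamA gm_A[OF gm bW]] .
      finally show "coeff (lim_form phi M F) i = coeff (smult (phi lam) (lim_form phi M W)) i"
        using coeff_lim[OF gm dW] by simp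
    qed
    have LF0: "lim_form phi M F \<noteq> 0" using lim_nonzero_form[OF gm nf] M_def by simp
    then have c0: "phi lam \<noteq> 0" using LF by auto
    have "form_ord M (lim_form phi M F) x = form_ord M (h ^ 2 * wr ph qh) x"
      unfolding LF LW form_ord_def using c0 by (simp add: order_smult)
    moreover have "int (form_ord M (h ^ 2 * wr ph qh) x) = crit_div e ph qh x + 2 * int (form_ord k h x)"
    proof -
      obtain a b where x: "x = (a, b)" by (cases x)
      have hh: "h ^ 2 * wr ph qh = h * (h * wr ph qh)" by (simp add: power2_eq_square mult.assoc)
      show ?thesis
      proof (cases "b = 0")
        case False
        have "order (a / b) (h ^ 2 * wr ph qh) = 2 * order (a / b) h + order (a / b) (wr ph qh)"
          unfolding hh using h0 Wh0 by (simp add: order_mult)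
        then show ?thesis using oWh[OF x0] False unfolding x form_ord_def by simp
      next
        case True
        have "degree (h ^ 2 * wr ph qh) = 2 * degree h + degree (wr ph qh)"
          unfolding hh using h0 Wh0 by (simp add: degree_mult_eq)
        moreover have "M = 2 * k + (2 * e - 2)" using M_def ke e1 by simp
        ultimately have "form_ord M (h ^ 2 * wr ph qh) x = 2 * (k - degree h) + (2 * e - 2 - degree (wr ph qh))"
          unfolding x form_ord_def using True dh dWh by simp
        then show ?thesis using oWh[OF x0] dh unfolding x form_ord_def using True by simp
      qed
    qed
    ultimately show "int (form_ord (2 * d - 2) (lim_form phi (2 * d - 2) F) x) = crit_div e ph qh x + 2 * int (form_ord k h x)"
      unfolding M_def by simp
  qed
qed

theorem mainTheorem2:
  fixes w :: "nat filter" and eta :: "nat \<Rightarrow> real" and d :: nat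
    and P Q F :: "nat \<Rightarrow> complex poly"
    and phi :: "(nat \<Rightarrow> complex) \<Rightarrow> 'k::field"
    and psi :: "(nat \<Rightarrow> complex) \<Rightarrow> 'r::field"
  assumes "free_ultrafilter w"
    and "is_scale eta"
    and "d \<ge> 1"
    and "\<And>n. rat_map d (P n) (Q n)"
    and "\<And>n. normalized_pair d (P n) (Q n)"
    and "\<And>n. normalized_form (2 * d - 2) (F n)"
    and "\<And>n x. x \<noteq> (0, 0) \<Longrightarrow> int (form_ord (2 * d - 2) (F n) x) = crit_div d (P n) (Q n) x"
    and "quotient_map (admissible w eta) (negligible w eta) phi"
  shows "crit_limit_formula phi d P Q F
    \<and> (scale_less w eta (\<lambda>n. 1) \<longrightarrow> quotient_map (val_ring w eta) (max_ideal w eta) psi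
         \<longrightarrow> crit_limit_formula psi d P Q F)"
proof (intro conjI impI)
  show "crit_limit_formula phi d P Q F"
    using abstract_main[OF goodmap_phi[OF assms(1,2,8)] assms(3-7)] .
next
  assume sl: "scale_less w eta (\<lambda>n. 1)" and qm: "quotient_map (val_ring w eta) (max_ideal w eta) psi"
  show "crit_limit_formula psi d P Q F"
    using abstract_main[OF goodmap_psi[OF assms(1,2) sl qm] assms(3-7)] .
qed

end
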